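(* Let $n\ge3$ and let $\mathcal{L}$ be the operator on $\mathbb{R}^{\mathbb{Z}_n}$ given by $(\mathcal{L}v)(k)=\frac12\big(v(k+1)+v(k-1)\big)$ (indices mod $n$), and let $\mathbf{e}_0\in\mathbb{R}^{\mathbb{Z}_n}$ be the indicator vector of $0$. Then for every integer $\tau\ge1$, $$\max\left\{\frac1n,\frac{1}{2\sqrt{\tau}}\right\}\le \langle \mathbf{e}_0,\mathcal{L}^{2\tau}\mathbf{e}_0\rangle\le\frac4n+\frac{1}{\sqrt{\pi\tau}}.$$
   Context: $\mathcal{L}$ is the FTCS operator in dimension $d=1$ with $r=1/2$ (i.e. $\Delta t=\Delta x^2/(2\alpha)$); it is the transition matrix of the simple random walk on the cycle $\mathbb{Z}_n$, and $\langle \mathbf{e}_0,\mathcal{L}^{2\tau}\mathbf{e}_0\rangle=\|\mathcal{L}^\tau\mathbf{e}_0\|_2^2$. *)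

theory Defs
  imports "HOL-Analysis.Analysis"
begin

text \<open>Vectors in R^(Z_n) are represented as functions nat => real; only the values
on {0..<n} (residues mod n) matter. Indices are taken mod n.\<close>

definition cycle_op :: "nat \<Rightarrow> (nat \<Rightarrow> real) \<Rightarrow> (nat \<Rightarrow> real)" where
  "cycle_op n v = (\<lambda>k. (v ((k + 1) mod n) + v ((k + n - 1) mod n)) / 2)"

definition e0 :: "nat \<Rightarrow> nat \<Rightarrow> real" where
  "e0 n = (\<lambda>k. if k mod n = 0 then 1 else 0)"

definition cyc_inner :: "nat \<Rightarrow> (nat \<Rightarrow> real) \<Rightarrow> (nat \<Rightarrow> real) \<Rightarrow> real" where
  "cyc_inner n u v = (\<Sum>k<n. u k * v k)"

end

theory Submission
  imports Defs "HOL-Real_Asymp.Real_Asymp"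
begin


lemma shift_sum:
  assumes "n > 0"
  shows "(\<Sum>k<n. f k ((k+1) mod n)) = (\<Sum>k<n. f ((k+n-1) mod n) (k::nat))"
proof (rule sum.reindex_bij_witness[where j="\<lambda>k. (k+1) mod n" and i="\<lambda>k. (k+n-1) mod n"])
  fix a assume a: "a \<in> {..<n}"
  show "((a+1) mod n + n - 1) mod n = a"
  proof (cases "a + 1 = n")
    case True then show ?thesis using assms by simp
  next
    case False then have "a+1 < n" using a by simp
    then show ?thesis by simp
  qed
  show "(a+1) mod n \<in> {..<n}" using assms by simp
next
  fix b assume b: "b \<in> {..<n}"
  show "((b+n-1) mod n + 1) mod n = b"
  proof (cases "b = 0")
    case True then show ?thesis using assms by (simp add: mod_Suc_eq)
  next
    case False then have "b + n - 1 = (b - 1) + n" by simp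
    then show ?thesis using b False by (simp add: mod_Suc_eq)
  qed
  show "(b+n-1) mod n \<in> {..<n}" using assms by simp
next
  fix a assume a: "a \<in> {..<n}"
  have "((a+1) mod n + n - 1) mod n = a"
  proof (cases "a + 1 = n")
    case True then show ?thesis using assms by simp
  next
    case False then have "a+1 < n" using a by simp
    then show ?thesis by simp
  qed
  then show "f (((a+1) mod n + n - 1) mod n) ((a+1) mod n) = f a ((a+1) mod n)" by simp
qed

lemma self_adj:
  assumes "n > 0"
  shows "cyc_inner n u (cycle_op n v) = cyc_inner n (cycle_op n u) v"
proof -
  have 1: "(\<Sum>k<n. u k * v ((k+1) mod n)) = (\<Sum>k<n. u ((k+n-1) mod n) * v k)"
    using shift_sum[OF assms, of "\<lambda>k l. u k * v l"] by simp
  have 2: "(\<Sum>k<n. u ((k+1) mod n) * v k) = (\<Sum>k<n. u k * v ((k+n-1) mod n))"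
    using shift_sum[OF assms, of "\<lambda>k l. u l * v k"] by simp
  have "cyc_inner n u (cycle_op n v) = ((\<Sum>k<n. u k * v ((k+1) mod n)) + (\<Sum>k<n. u k * v ((k+n-1) mod n)))/2"
    unfolding cyc_inner_def cycle_op_def by (simp add: sum.distrib distrib_left flip: sum_divide_distrib)
  also have "\<dots> = ((\<Sum>k<n. u ((k+n-1) mod n) * v k) + (\<Sum>k<n. u ((k+1) mod n) * v k))/2"
    using 1 2 by simp
  also have "\<dots> = cyc_inner n (cycle_op n u) v"
    unfolding cyc_inner_def cycle_op_def by (simp add: sum.distrib distrib_right flip: sum_divide_distrib)
  finally show ?thesis .
qed

lemma self_adj_pow:
  assumes "n > 0"
  shows "cyc_inner n u ((cycle_op n ^^ j) v) = cyc_inner n ((cycle_op n ^^ j) u) v"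
proof (induction j arbitrary: u)
  case 0 then show ?case by simp
next
  case (Suc j)
  have "cyc_inner n u ((cycle_op n ^^ Suc j) v) = cyc_inner n (cycle_op n u) ((cycle_op n ^^ j) v)"
    using self_adj[OF assms] by simp
  also have "\<dots> = cyc_inner n ((cycle_op n ^^ j) (cycle_op n u)) v" by (rule Suc.IH)
  also have "\<dots> = cyc_inner n ((cycle_op n ^^ Suc j) u) v" by (simp only: funpow_Suc_right o_def)
  finally show ?case .
qed

lemma mass:
  assumes "n > 0"
  shows "(\<Sum>k<n. cycle_op n w k) = (\<Sum>k<n. w k)"
proof -
  have 1: "(\<Sum>k<n. w ((k+1) mod n)) = (\<Sum>k<n. w k)"
    using shift_sum[OF assms, of "\<lambda>k l. w l"] by simp
  have 2: "(\<Sum>k<n. w k) = (\<Sum>k<n. w ((k+n-1) mod n))"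
    using shift_sum[OF assms, of "\<lambda>k l. w k"] by simp
  show ?thesis unfolding cycle_op_def using 1 2
    by (simp add: sum.distrib flip: sum_divide_distrib)
qed

lemma mass_pow:
  assumes "n > 0"
  shows "(\<Sum>k<n. (cycle_op n ^^ j) (e0 n) k) = 1"
proof (induction j)
  case 0
  have "(\<Sum>k<n. e0 n k) = (\<Sum>k<n. if k = 0 then 1 else 0)"
    unfolding e0_def by (rule sum.cong) auto
  then show ?case using assms by simp
next
  case (Suc j) then show ?case using mass[OF assms] by simp
qed

lemma inner_e0:
  assumes "n > 0"
  shows "cyc_inner n (e0 n) w = w 0"
proof -
  have "cyc_inner n (e0 n) w = (\<Sum>k<n. if k = 0 then w k else 0)"
    unfolding cyc_inner_def e0_def by (rule sum.cong) auto
  then show ?thesis using assms by simp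
qed

lemma lower_n:
  assumes "n > 0"
  shows "1 / real n \<le> cyc_inner n (e0 n) ((cycle_op n ^^ (2 * \<tau>)) (e0 n))"
proof -
  define w where "w = (cycle_op n ^^ \<tau>) (e0 n)"
  have "cyc_inner n (e0 n) ((cycle_op n ^^ (2 * \<tau>)) (e0 n)) = cyc_inner n (e0 n) ((cycle_op n ^^ \<tau>) w)"
    unfolding w_def by (simp add: mult_2 funpow_add)
  also have "\<dots> = cyc_inner n w w" unfolding w_def by (rule self_adj_pow[OF assms])
  finally have p: "cyc_inner n (e0 n) ((cycle_op n ^^ (2 * \<tau>)) (e0 n)) = (\<Sum>k<n. (w k)\<^sup>2)"
    unfolding cyc_inner_def by (simp add: power2_eq_square)
  have "(\<Sum>k<n. w k)\<^sup>2 \<le> (\<Sum>k<n. (w k)\<^sup>2) * card {..<n}" by (rule sum_squared_le_sum_of_squares)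
  moreover have "(\<Sum>k<n. w k) = 1" unfolding w_def by (rule mass_pow[OF assms])
  ultimately have "1 \<le> (\<Sum>k<n. (w k)\<^sup>2) * real n" by simp
  then show ?thesis unfolding p using assms by (simp add: field_simps)
qed



definition cb :: "nat \<Rightarrow> real" where "cb m = real ((2*m) choose m) / 4^m"

lemma aux_rec:
  fixes X Y Z m :: nat
  assumes "(2*m+2)*Y = X*(m+1)" "(2*m+1)*Z = Y*(m+1)"
  shows "(m+1)*X = 2*(2*m+1)*Z"
proof -
  have "(m+1)*((m+1)*X) = (2*m+2)*Y*(m+1)" using assms(1) by (simp add: algebra_simps)
  also have "\<dots> = (2*m+2)*((2*m+1)*Z)" using assms(2) by (simp add: algebra_simps)
  also have "\<dots> = (m+1)*(2*(2*m+1)*Z)" by (simp add: algebra_simps)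
  finally show ?thesis by (simp only: mult_left_cancel)
qed

lemma central_rec: "(Suc m) * ((2 * Suc m) choose Suc m) = 2 * (2*m+1) * ((2*m) choose m)"
proof -
  have a: "(2*m+2) * ((2*m+1) choose m) = ((2*m+2) choose (m+1)) * (m+1)"
    using Suc_times_binomial_eq[of "2*m+1" m] by (simp del: binomial_Suc_Suc)
  have b: "(2*m+1) * ((2*m) choose m) = ((2*m+1) choose (m+1)) * (m+1)"
    using Suc_times_binomial_eq[of "2*m" m] by (simp del: binomial_Suc_Suc)
  have c: "(2*m+1) choose (m+1) = (2*m+1) choose m"
    using binomial_symmetric[of "m+1" "2*m+1"] by simp
  have "(m+1) * ((2*m+2) choose (m+1)) = 2 * (2*m+1) * ((2*m) choose m)"
    by (rule aux_rec[OF a]) (use b c in simp)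
  then show ?thesis by (simp del: binomial_Suc_Suc add: numeral_2_eq_2)
qed

lemma cb_rec: "cb (Suc m) = cb m * (2*m+1) / (2*m+2)"
proof -
  define A where "A = real ((2 * Suc m) choose Suc m)"
  define B where "B = real ((2*m) choose m)"
  have "real (Suc m) * A = 2 * (2*m+1) * B"
    unfolding A_def B_def using arg_cong[OF central_rec, of real] by (simp only: of_nat_mult of_nat_Suc of_nat_add of_nat_numeral)
  then have "A = 2 * (2*m+1) * B / (m+1)"
    by (simp add: field_simps)
  moreover have "cb (Suc m) = A / 4^(Suc m)" "cb m = B / 4^m" unfolding cb_def A_def B_def by simp_all
  ultimately have "cb (Suc m) = (2 * (2*m+1) * B / (m+1)) / (4 * 4^m)" by simp
  also have "\<dots> = (B / 4^m) * (2*m+1) / (2*m+2)" by (simp add: divide_simps) (simp add: algebra_simps)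
  finally show ?thesis using \<open>cb m = B / 4^m\<close> by simp
qed

lemma cb_pos: "cb m > 0" unfolding cb_def by simp

lemma helper1: "(real m+1) * c^2 * (2*real m+1)^2 / (4*((real m+1)*(real m+1))) = c^2 * ((2*real m+1)^2 / (4*(real m+1)))"
  by (simp add: divide_simps)

lemma helper2: "c*c*4 = (1::real) \<Longrightarrow> c*c \<le> real m * (d*d) \<Longrightarrow> 1 \<le> 4 * (sqrt (real m) * (d * (sqrt (real m) * d)))"
  by (simp add: algebra_simps)

definition cc :: "nat \<Rightarrow> real" where "cc m = real m * (cb m)^2"

lemma cc_inc: "incseq cc"
proof (rule incseq_SucI)
  fix m
  have "cc (Suc m) = (m+1) * (cb m)^2 * (2*m+1)^2 / (2*m+2)^2"
    unfolding cc_def cb_rec by (simp add: power_divide power2_eq_square algebra_simps)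
  also have "\<dots> = (real m+1) * (cb m)^2 * (2*real m+1)^2 / (4*((real m+1)*(real m+1)))"
    by (simp add: power2_eq_square algebra_simps)
  also have "\<dots> = (cb m)^2 * ((2*real m+1)^2 / (4*(real m+1)))"
    by (rule helper1)
  also have "\<dots> \<ge> (cb m)^2 * m"
  proof (rule mult_left_mono)
    have "real m * (4*(real m+1)) \<le> (2*real m+1)^2" by (simp add: power2_eq_square algebra_simps)
    then show "real m \<le> (2*real m+1)^2 / (4*(real m+1))" by (simp add: field_simps)
  qed simp
  finally show "cc m \<le> cc (Suc m)" unfolding cc_def by (simp add: mult.commute)
qed

definition W :: "nat \<Rightarrow> real" where "W m = (\<Prod>k=1..m. (4*real k^2) / (4*real k^2 - 1))"

lemma W_eq: "W m = 1 / ((cb m)^2 * (2*m+1))"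
proof (induction m)
  case 0 then show ?case by (simp add: W_def cb_def)
next
  case (Suc m)
  have "W (Suc m) = (4*real (Suc m)^2) / (4*real (Suc m)^2 - 1) * W m"
    unfolding W_def by (simp add: prod.nat_ivl_Suc')
  also have "\<dots> = (4*real (Suc m)^2) / (4*real (Suc m)^2 - 1) / ((cb m)^2 * (2*m+1))"
    using Suc by simp
  also have "\<dots> = 1 / ((cb (Suc m))^2 * (2 * Suc m + 1))"
    using cb_pos[of m] unfolding cb_rec
    by (simp add: field_simps power2_eq_square)
  finally show ?case .
qed

lemma cc_lim: "cc \<longlonglongrightarrow> 1/pi"
proof -
  have W: "W \<longlonglongrightarrow> pi/2" using wallis unfolding W_def .
  have "(\<lambda>m. real m / (2*m+1) * inverse (W m)) \<longlonglongrightarrow> 1/2 * inverse (pi/2)"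
  proof (rule tendsto_mult)
    show "(\<lambda>m. real m / (2*m+1)) \<longlonglongrightarrow> 1/2" by real_asymp
    show "(\<lambda>m. inverse (W m)) \<longlonglongrightarrow> inverse (pi/2)" by (rule tendsto_inverse[OF W]) simp
  qed
  moreover have "(\<lambda>m. real m / (2*m+1) * inverse (W m)) = cc"
  proof
    fix m show "real m / (2*m+1) * inverse (W m) = cc m"
      unfolding W_eq cc_def by (simp add: field_simps)
  qed
  ultimately show ?thesis by simp
qed

lemma cb_upper: assumes "m \<ge> 1" shows "cb m \<le> 1 / sqrt (pi * m)"
proof -
  have "cc m \<le> 1/pi" by (rule incseq_le[OF cc_inc cc_lim])
  then have "m * (cb m)^2 * pi \<le> 1" unfolding cc_def by (simp add: field_simps)
  then have "(cb m * sqrt (pi * m))^2 \<le> 1" by (simp add: power_mult_distrib algebra_simps)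
  then have "cb m * sqrt (pi * m) \<le> 1"
    by (metis abs_le_square_iff abs_of_nonneg power_one zero_le_one abs_le_D1 le_less)
  then show ?thesis using assms pi_gt_zero by (simp add: field_simps)
qed

lemma sq_ge1: "(x::real) \<ge> 0 \<Longrightarrow> 1 \<le> x*x \<Longrightarrow> 1 \<le> x"
  by (smt (verit, del_insts) mult_left_le)

lemma cb_lower: assumes "m \<ge> 1" shows "1 / (2 * sqrt m) \<le> cb m"
proof -
  have "cc 1 \<le> cc m" using cc_inc assms by (simp add: incseq_def)
  then have h2: "cb 1 * cb 1 \<le> real m * (cb m * cb m)" unfolding cc_def by (simp add: power2_eq_square)
  have h1: "cb 1 * cb 1 * 4 = 1" by (simp add: cb_def)
  have "1 \<le> 4 * (sqrt (real m) * (cb m * (sqrt (real m) * cb m)))" by (rule helper2[OF h1 h2])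
  also have "\<dots> = (2 * sqrt m * cb m) * (2 * sqrt m * cb m)" by (simp add: mult_ac)
  finally have "1 \<le> 2 * sqrt m * cb m" by (rule sq_ge1[rotated]) (simp add: less_imp_le[OF cb_pos])
  then show ?thesis using assms by (simp add: field_simps)
qed


lemma pascal_sum:
  fixes g :: "nat \<Rightarrow> real"
  shows "(\<Sum>i\<le>Suc t. real (Suc t choose i) * g i)
       = (\<Sum>i\<le>t. real (t choose i) * g (Suc i)) + (\<Sum>i\<le>t. real (t choose i) * g i)"
proof -
  have "(\<Sum>i\<le>Suc t. real (Suc t choose i) * g i)
        = g 0 + (\<Sum>i\<le>t. real (Suc t choose Suc i) * g (Suc i))"
    by (subst sum.atMost_Suc_shift) simp
  also have "\<dots> = g 0 + (\<Sum>i\<le>t. real (t choose i) * g (Suc i)) + (\<Sum>i\<le>t. real (t choose Suc i) * g (Suc i))"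
    by (simp add: sum.distrib algebra_simps)
  also have "g 0 + (\<Sum>i\<le>t. real (t choose i) * g (Suc i)) + (\<Sum>i\<le>t. real (t choose Suc i) * g (Suc i))
     = (\<Sum>i\<le>t. real (t choose i) * g (Suc i)) + (g 0 + (\<Sum>i\<le>t. real (t choose Suc i) * g (Suc i)))"
    by simp
  also have "g 0 + (\<Sum>i\<le>t. real (t choose Suc i) * g (Suc i)) = (\<Sum>i\<le>Suc t. real (t choose i) * g i)"
    by (subst sum.atMost_Suc_shift) simp
  also have "\<dots> = (\<Sum>i\<le>t. real (t choose i) * g i)"
    by simp
  finally show ?thesis .
qed

lemma op_formula:
  assumes "n > 0" "k < n"
  shows "(cycle_op n ^^ t) v k = (\<Sum>i\<le>t. real (t choose i) * v ((k + i + (n-1)*(t-i)) mod n)) / 2^t"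
proof (induction t arbitrary: v)
  case 0 then show ?case using assms by simp
next
  case (Suc t)
  define g where "g i = v ((k + i + (n-1)*(Suc t - i)) mod n)" for i
  have key: "cycle_op n v ((k + i + (n-1)*(t-i)) mod n) = (g (Suc i) + g i) / 2" if "i \<le> t" for i
  proof -
    have a: "((k + i + (n-1)*(t-i)) mod n + 1) mod n = (k + Suc i + (n-1)*(Suc t - Suc i)) mod n"
      by (simp add: mod_Suc_eq)
    have b: "((k + i + (n-1)*(t-i)) mod n + n - 1) mod n = (k + i + (n-1)*(Suc t - i)) mod n"
    proof -
      have "(k + i + (n-1)*(t-i)) mod n + n - 1 = (k + i + (n-1)*(t-i)) mod n + (n - 1)"
        using assms by simp
      also have "(\<dots>) mod n = (k + i + (n-1)*(t-i) + (n-1)) mod n" by (simp add: mod_add_left_eq)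
      also have "k + i + (n-1)*(t-i) + (n-1) = k + i + (n-1)*(Suc t - i)"
        using that by (simp add: Suc_diff_le algebra_simps)
      finally show ?thesis .
    qed
    show ?thesis unfolding cycle_op_def g_def using a b by simp
  qed
  have "(cycle_op n ^^ Suc t) v k = (cycle_op n ^^ t) (cycle_op n v) k"
    by (simp only: funpow_Suc_right o_def)
  also have "\<dots> = (\<Sum>i\<le>t. real (t choose i) * cycle_op n v ((k + i + (n-1)*(t-i)) mod n)) / 2^t"
    by (rule Suc.IH)
  also have "\<dots> = (\<Sum>i\<le>t. real (t choose i) * ((g (Suc i) + g i) / 2)) / 2^t"
    by (intro arg_cong2[where f="(/)"] sum.cong refl) (simp add: key[simplified])
  also have "\<dots> = ((\<Sum>i\<le>t. real (t choose i) * g (Suc i)) + (\<Sum>i\<le>t. real (t choose i) * g i)) / 2^Suc t"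
    by (simp add: sum.distrib algebra_simps flip: sum_divide_distrib)
  also have "\<dots> = (\<Sum>i\<le>Suc t. real (Suc t choose i) * g i) / 2^Suc t"
    by (simp only: pascal_sum)
  finally show ?case unfolding g_def .
qed



lemma dvd_char:
  assumes "i \<le> 2*\<tau>" "n > 0"
  shows "(n dvd (i + (n-1)*(2*\<tau>-i))) \<longleftrightarrow> int n dvd (2*int i - 2*int \<tau>)"
proof -
  have h1: "int (n-1) = int n - 1" using assms by simp
  have h2: "int (2*\<tau>-i) = 2*int \<tau> - int i" using assms by simp
  have "int (i + (n-1)*(2*\<tau>-i)) = int i + int (n-1) * int (2*\<tau>-i)" by (simp only: of_nat_add of_nat_mult)
  also have "\<dots> = (2*int i - 2*int \<tau>) + int n * (2*int \<tau> - int i)"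
    unfolding h1 h2 by (simp add: algebra_simps)
  finally have "int (i + (n-1)*(2*\<tau>-i)) = (2*int i - 2*int \<tau>) + int n * (2*int \<tau> - int i)" .
  then have "(n dvd (i + (n-1)*(2*\<tau>-i))) \<longleftrightarrow> int n dvd ((2*int i - 2*int \<tau>) + int n * (2*int \<tau> - int i))"
    by (metis of_nat_dvd_iff)
  also have "\<dots> \<longleftrightarrow> int n dvd (2*int i - 2*int \<tau>)"
    by (simp add: dvd_add_left_iff)
  finally show ?thesis .
qed

lemma spacing:
  assumes "int n dvd (2*int i - 2*int \<tau>)" "int n dvd (2*int i' - 2*int \<tau>)" "i < i'" "n > 0"
  shows "i + (n+1) div 2 \<le> i'"
proof -
  have "int n dvd (2*int i' - 2*int \<tau>) - (2*int i - 2*int \<tau>)" using assms(1,2) by (rule dvd_diff[rotated])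
  then have "int n dvd (2*(int i' - int i))" by (simp add: algebra_simps)
  moreover have "0 < 2*(int i' - int i)" using assms(3) by simp
  ultimately have "int n \<le> 2*(int i' - int i)" by (rule zdvd_imp_le)
  then have "int (n + 2*i) \<le> int (2*i')" by simp
  then have "n + 2*i \<le> 2*i'" by (simp only: of_nat_le_iff)
  then show ?thesis by presburger
qed

lemma count_bound:
  fixes n \<tau> m :: nat
  defines "S \<equiv> {i\<in>{..2*\<tau>}. int n dvd (2*int i - 2*int \<tau>)}"
  defines "m \<equiv> (n+1) div 2"
  assumes "n \<ge> 3"
  shows "m * (\<Sum>i\<in>S-{\<tau>}. (2*\<tau>) choose i) \<le> 4^\<tau>"
proof -
  define T where "T = S - {\<tau>}"
  define I where "I i = (if \<tau> < i then {i-m<..i} else {i..<i+m})" for i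
  have m1: "m \<ge> 1" unfolding m_def using assms by simp
  have tS: "\<tau> \<in> S" unfolding S_def by simp
  have up: "\<tau> + m \<le> i" if "i \<in> T" "\<tau> < i" for i
    using spacing[of n \<tau> \<tau> i] that tS assms unfolding T_def S_def m_def by auto
  have lo: "i + m \<le> \<tau>" if "i \<in> T" "i < \<tau>" for i
    using spacing[of n i \<tau> \<tau>] that tS assms unfolding T_def S_def m_def by auto
  have le: "i \<le> 2*\<tau>" if "i \<in> T" for i using that unfolding T_def S_def by auto
  have neq: "i \<noteq> \<tau>" if "i \<in> T" for i using that unfolding T_def by auto
  have finT: "finite T" unfolding T_def S_def by auto
  have card: "card (I i) = m" if "i \<in> T" for i
    using up[OF that] unfolding I_def by auto
  have mono: "(2*\<tau>) choose i \<le> (2*\<tau>) choose j" if "i \<in> T" "j \<in> I i" for i j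
  proof (cases "\<tau> < i")
    case True
    then have "j \<le> i" "\<tau> \<le> j" using that up[OF that(1) True] unfolding I_def by auto
    then show ?thesis using binomial_antimono[of j i "2*\<tau>"] le[OF that(1)] by simp
  next
    case False
    then have "i < \<tau>" using neq[OF that(1)] by simp
    then have "i \<le> j" "j \<le> \<tau>" using that lo[OF that(1)] False unfolding I_def by auto
    then show ?thesis using binomial_mono[of i j "2*\<tau>"] by simp
  qed
  have sub: "I i \<subseteq> {..2*\<tau>}" if "i \<in> T" for i
    using le[OF that] lo[OF that] neq[OF that] unfolding I_def by auto
  have disj: "I i \<inter> I j = {}" if "i \<in> T" "j \<in> T" "i \<noteq> j" for i j
  proof -
    have sp: "i + m \<le> j" if "i \<in> T" "j \<in> T" "i < j" for i j
      using spacing[of n i \<tau> j] that assms unfolding T_def S_def m_def by auto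
    have u1: "\<tau> < i \<longrightarrow> \<tau> + m \<le> i" "\<tau> < j \<longrightarrow> \<tau> + m \<le> j"
      "i < \<tau> \<longrightarrow> i + m \<le> \<tau>" "j < \<tau> \<longrightarrow> j + m \<le> \<tau>"
      using up lo that by auto
    have u2: "i < j \<longrightarrow> i + m \<le> j" "j < i \<longrightarrow> j + m \<le> i" using sp that by auto
    have u3: "i \<noteq> \<tau>" "j \<noteq> \<tau>" using neq that by auto
    show ?thesis
    proof (rule ccontr)
      assume "I i \<inter> I j \<noteq> {}"
      then obtain x where "x \<in> I i" "x \<in> I j" by blast
      then show False using u1 u2 u3 that(3) unfolding I_def
        by (auto split: if_splits)
    qed
  qed
  have "m * (\<Sum>i\<in>T. (2*\<tau>) choose i) = (\<Sum>i\<in>T. \<Sum>j\<in>I i. (2*\<tau>) choose i)"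
    by (simp add: sum_distrib_left card mult.commute)
  also have "\<dots> \<le> (\<Sum>i\<in>T. \<Sum>j\<in>I i. (2*\<tau>) choose j)"
    by (intro sum_mono) (simp add: mono)
  also have "\<dots> = (\<Sum>j\<in>(\<Union>i\<in>T. I i). (2*\<tau>) choose j)"
    by (rule sum.UNION_disjoint[symmetric]) (use finT disj in \<open>auto simp: I_def\<close>)
  also have "\<dots> \<le> (\<Sum>j\<le>2*\<tau>. (2*\<tau>) choose j)"
    by (intro sum_mono2) (use sub in auto)
  also have "\<dots> = 4^\<tau>" by (simp add: choose_row_sum power_mult)
  finally show ?thesis unfolding T_def .
qed


theorem mainTheorem5:
  fixes n \<tau> :: nat
  assumes "n \<ge> 3" and "\<tau> \<ge> 1"
  shows "max (1 / real n) (1 / (2 * sqrt (real \<tau>)))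
           \<le> cyc_inner n (e0 n) ((cycle_op n ^^ (2 * \<tau>)) (e0 n))
       \<and> cyc_inner n (e0 n) ((cycle_op n ^^ (2 * \<tau>)) (e0 n))
           \<le> 4 / real n + 1 / sqrt (pi * real \<tau>)"
proof -
  have n0: "n > 0" using assms by simp
  define p where "p = cyc_inner n (e0 n) ((cycle_op n ^^ (2 * \<tau>)) (e0 n))"
  define S where "S = {i\<in>{..2*\<tau>}. int n dvd (2*int i - 2*int \<tau>)}"
  define m where "m = (n+1) div 2"
  have finS: "finite S" unfolding S_def by simp
  have tS: "\<tau> \<in> S" unfolding S_def by simp
  have "p = (cycle_op n ^^ (2 * \<tau>)) (e0 n) 0" unfolding p_def by (rule inner_e0[OF n0])
  also have "\<dots> = (\<Sum>i\<le>2*\<tau>. real ((2*\<tau>) choose i) * e0 n ((0 + i + (n-1)*(2*\<tau>-i)) mod n)) / 2^(2*\<tau>)"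
    by (rule op_formula[OF n0 n0])
  also have "(\<Sum>i\<le>2*\<tau>. real ((2*\<tau>) choose i) * e0 n ((0 + i + (n-1)*(2*\<tau>-i)) mod n))
      = (\<Sum>i\<le>2*\<tau>. if int n dvd (2*int i - 2*int \<tau>) then real ((2*\<tau>) choose i) else 0)"
  proof (rule sum.cong[OF refl])
    fix i assume "i \<in> {..2*\<tau>}"
    then have "i \<le> 2*\<tau>" by simp
    then have "(n dvd (i + (n-1)*(2*\<tau>-i))) \<longleftrightarrow> int n dvd (2*int i - 2*int \<tau>)"
      by (rule dvd_char[OF _ n0])
    then show "real ((2*\<tau>) choose i) * e0 n ((0 + i + (n-1)*(2*\<tau>-i)) mod n)
      = (if int n dvd (2*int i - 2*int \<tau>) then real ((2*\<tau>) choose i) else 0)"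
      unfolding e0_def by (auto simp: dvd_eq_mod_eq_0)
  qed
  also have "\<dots> = (\<Sum>i\<in>S. real ((2*\<tau>) choose i))"
    unfolding S_def by (rule sum.inter_filter[symmetric]) simp
  also have "\<dots> = real ((2*\<tau>) choose \<tau>) + (\<Sum>i\<in>S-{\<tau>}. real ((2*\<tau>) choose i))"
    using sum.remove[OF finS tS] by simp
  finally have pe: "p = cb \<tau> + (\<Sum>i\<in>S-{\<tau>}. real ((2*\<tau>) choose i)) / 4^\<tau>"
    unfolding cb_def by (simp add: power_mult add_divide_distrib)
  define R where "R = (\<Sum>i\<in>S-{\<tau>}. real ((2*\<tau>) choose i)) / 4^\<tau>"
  have R0: "R \<ge> 0" unfolding R_def by (simp add: sum_nonneg)
  have cnt: "m * (\<Sum>i\<in>S-{\<tau>}. (2*\<tau>) choose i) \<le> 4^\<tau>"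
    unfolding S_def m_def by (rule count_bound[OF assms(1)])
  then have "real m * (\<Sum>i\<in>S-{\<tau>}. real ((2*\<tau>) choose i)) \<le> 4^\<tau>"
    by (metis (mono_tags) of_nat_le_iff of_nat_mult of_nat_numeral of_nat_power of_nat_sum)
  then have "real m * R \<le> 1" unfolding R_def by (simp add: field_simps)
  moreover have "real n \<le> 2 * real m" unfolding m_def by linarith
  ultimately have "real n * R \<le> 2" 
  proof -
    assume a: "real m * R \<le> 1" "real n \<le> 2 * real m"
    have "real n * R \<le> (2 * real m) * R" by (rule mult_right_mono[OF a(2) R0])
    then show ?thesis using a(1) by simp
  qed
  then have Rb: "R \<le> 4 / real n" using n0 by (simp add: field_simps)
  have pR: "p = cb \<tau> + R" unfolding pe R_def ..
  have l1: "1 / real n \<le> p" unfolding p_def by (rule lower_n[OF n0])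
  have l2: "1 / (2 * sqrt (real \<tau>)) \<le> p" using cb_lower[OF assms(2)] R0 pR by linarith
  have u: "p \<le> 4 / real n + 1 / sqrt (pi * real \<tau>)" using cb_upper[OF assms(2)] Rb pR by linarith
  show ?thesis using l1 l2 u unfolding p_def by simp
qed

end
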